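(* Let $G$ be a non-complete double-critical $k$-chromatic graph with $k\ge 6$. Then no minimal separating set $S$ of $G$ can be partitioned into two disjoint sets $A$ and $B$ such that $G[A]$ is edge-empty and $G[B]$ is complete.
   Context: All graphs are finite and simple. A graph $G$ is (vertex-)critical if $\chi(G-v)<\chi(G)$ for every vertex $v\in V(G)$. A critical graph $G$ is double-critical if $\chi(G-x-y)\le\chi(G)-2$ for every edge $xy\in E(G)$. A separating set is a set $S\subseteq V(G)$ such that $G-S$ is disconnected; it is minimal if no proper subset is separating. Either of $A,B$ may be empty. *)

theory Defs
  imports Main
begin

text \<open>Subgraphs G - S are (V - S, E)
  (all notions below only consult E between vertices of the given vertex set).\<close>

definition simple_graph :: "'a set \<Rightarrow> ('a \<Rightarrow> 'a \<Rightarrow> bool) \<Rightarrow> bool" where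
  "simple_graph V E \<longleftrightarrow> finite V \<and>
     (\<forall>x y. E x y \<longrightarrow> x \<in> V \<and> y \<in> V \<and> x \<noteq> y \<and> E y x)"

definition proper_colouring :: "'a set \<Rightarrow> ('a \<Rightarrow> 'a \<Rightarrow> bool) \<Rightarrow> nat \<Rightarrow> ('a \<Rightarrow> nat) \<Rightarrow> bool" where
  "proper_colouring V E k f \<longleftrightarrow>
     (\<forall>v\<in>V. f v < k) \<and> (\<forall>x\<in>V. \<forall>y\<in>V. E x y \<longrightarrow> f x \<noteq> f y)"

definition chromatic_number :: "'a set \<Rightarrow> ('a \<Rightarrow> 'a \<Rightarrow> bool) \<Rightarrow> nat" where
  "chromatic_number V E = (LEAST k. \<exists>f. proper_colouring V E k f)"

definition vertex_critical :: "'a set \<Rightarrow> ('a \<Rightarrow> 'a \<Rightarrow> bool) \<Rightarrow> bool" where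
  "vertex_critical V E \<longleftrightarrow>
     (\<forall>v\<in>V. chromatic_number (V - {v}) E < chromatic_number V E)"

definition double_critical :: "'a set \<Rightarrow> ('a \<Rightarrow> 'a \<Rightarrow> bool) \<Rightarrow> bool" where
  "double_critical V E \<longleftrightarrow> vertex_critical V E \<and>
     (\<forall>x\<in>V. \<forall>y\<in>V. E x y \<longrightarrow>
        chromatic_number (V - {x, y}) E + 2 \<le> chromatic_number V E)"

definition complete_on :: "'a set \<Rightarrow> ('a \<Rightarrow> 'a \<Rightarrow> bool) \<Rightarrow> bool" where
  "complete_on V E \<longleftrightarrow> (\<forall>x\<in>V. \<forall>y\<in>V. x \<noteq> y \<longrightarrow> E x y)"

definition edgeless_on :: "'a set \<Rightarrow> ('a \<Rightarrow> 'a \<Rightarrow> bool) \<Rightarrow> bool" where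
  "edgeless_on V E \<longleftrightarrow> (\<forall>x\<in>V. \<forall>y\<in>V. \<not> E x y)"

definition reachable_in :: "'a set \<Rightarrow> ('a \<Rightarrow> 'a \<Rightarrow> bool) \<Rightarrow> 'a \<Rightarrow> 'a \<Rightarrow> bool" where
  "reachable_in V E x y \<longleftrightarrow> (\<lambda>a b. a \<in> V \<and> b \<in> V \<and> E a b)\<^sup>*\<^sup>* x y"

text \<open>Disconnected: there are two vertices with no path between them
  (so the empty graph and one-vertex graphs are not disconnected).\<close>
definition disconnected :: "'a set \<Rightarrow> ('a \<Rightarrow> 'a \<Rightarrow> bool) \<Rightarrow> bool" where
  "disconnected V E \<longleftrightarrow> (\<exists>x\<in>V. \<exists>y\<in>V. \<not> reachable_in V E x y)"

definition separating_set :: "'a set \<Rightarrow> ('a \<Rightarrow> 'a \<Rightarrow> bool) \<Rightarrow> 'a set \<Rightarrow> bool" where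
  "separating_set V E S \<longleftrightarrow> S \<subseteq> V \<and> disconnected (V - S) E"

definition minimal_separating_set :: "'a set \<Rightarrow> ('a \<Rightarrow> 'a \<Rightarrow> bool) \<Rightarrow> 'a set \<Rightarrow> bool" where
  "minimal_separating_set V E S \<longleftrightarrow> separating_set V E S \<and>
     (\<forall>T. T \<subset> S \<longrightarrow> \<not> separating_set V E T)"

end

theory Submission
  imports Defs
begin

definition canon :: "('a \<Rightarrow> nat) \<Rightarrow> 'a set \<Rightarrow> 'a set \<Rightarrow> bool" where
  "canon f S A \<longleftrightarrow> (\<forall>s\<in>S. \<forall>t\<in>S. (f s = f t \<longleftrightarrow> s = t \<or> (s \<in> A \<and> t \<in> A)))"

lemma colouring_exists:
  assumes "finite V" "\<forall>x y. E x y \<longrightarrow> x \<noteq> y"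
  shows "\<exists>f. proper_colouring V E (chromatic_number V E) f"
proof -
  obtain f and n :: nat where "f ` V = {i. i < n}" "inj_on f V"
    using finite_imp_inj_to_nat_seg[OF assms(1)] by blast
  hence "proper_colouring V E n f" using assms(2)
    unfolding proper_colouring_def inj_on_def by blast
  thus ?thesis unfolding chromatic_number_def
    using LeastI_ex[of "\<lambda>k. \<exists>f. proper_colouring V E k f"] by blast
qed

lemma colouring_mono:
  assumes "proper_colouring V E k f" "P \<subseteq> V" "k \<le> k'"
  shows "proper_colouring P E k' f"
  using assms unfolding proper_colouring_def by (meson less_le_trans subsetD)

lemma chrom_le:
  assumes "proper_colouring V E k f"
  shows "chromatic_number V E \<le> k"
  unfolding chromatic_number_def by (rule Least_le) (use assms in blast)

lemma extend_inj:
  fixes m :: nat and D :: "nat set" and \<sigma> :: "nat \<Rightarrow> nat"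
  assumes "D \<subseteq> {..<m}" "\<sigma> ` D \<subseteq> {..<m}" "inj_on \<sigma> D"
  shows "\<exists>\<pi>. inj_on \<pi> {..<m} \<and> \<pi> ` {..<m} \<subseteq> {..<m} \<and> (\<forall>d\<in>D. \<pi> d = \<sigma> d)"
proof -
  have fD: "finite D" by (rule finite_subset[OF assms(1)]) simp
  have c1: "card ({..<m} - D) = m - card D"
    using card_Diff_subset[OF fD assms(1)] by simp
  have c2: "card ({..<m} - \<sigma> ` D) = m - card (\<sigma> ` D)"
    using card_Diff_subset[OF finite_imageI[OF fD] assms(2)] by simp
  have "card (\<sigma> ` D) = card D" using assms(3) by (rule card_image)
  hence "card ({..<m} - D) = card ({..<m} - \<sigma> ` D)" using c1 c2 by simp
  moreover have "finite ({..<m} - D)" "finite ({..<m} - \<sigma> ` D)" by simp_all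
  ultimately obtain \<phi> where phi: "bij_betw \<phi> ({..<m} - D) ({..<m} - \<sigma> ` D)"
    using finite_same_card_bij by metis
  have phi_in: "\<phi> x \<in> {..<m} - \<sigma> ` D" if "x \<in> {..<m} - D" for x
    using bij_betwE[OF phi] that by blast
  have phi_inj: "inj_on \<phi> ({..<m} - D)" using phi by (rule bij_betw_imp_inj_on)
  define \<pi> where "\<pi> x = (if x \<in> D then \<sigma> x else \<phi> x)" for x
  have "inj_on \<pi> {..<m}"
  proof (rule inj_onI)
    fix x y assume xy: "x \<in> {..<m}" "y \<in> {..<m}" "\<pi> x = \<pi> y"
    show "x = y"
    proof (cases "x \<in> D"; cases "y \<in> D")
      assume "x \<in> D" "y \<in> D" thus ?thesis using xy assms(3) unfolding \<pi>_def inj_on_def by simp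
    next
      assume a: "x \<in> D" "y \<notin> D"
      hence "\<phi> y \<notin> \<sigma> ` D" using phi_in xy(2) by blast
      moreover have "\<pi> y = \<phi> y" "\<pi> x = \<sigma> x" using a unfolding \<pi>_def by auto
      ultimately show ?thesis using xy(3) a(1) by (metis imageI)
    next
      assume a: "x \<notin> D" "y \<in> D"
      hence "\<phi> x \<notin> \<sigma> ` D" using phi_in xy(1) by blast
      moreover have "\<pi> x = \<phi> x" "\<pi> y = \<sigma> y" using a unfolding \<pi>_def by auto
      ultimately show ?thesis using xy(3) a(2) by (metis imageI)
    next
      assume a: "x \<notin> D" "y \<notin> D"
      hence "\<phi> x = \<phi> y" using xy(3) unfolding \<pi>_def by simp
      thus ?thesis using phi_inj a xy(1,2) unfolding inj_on_def by blast
    qed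
  qed
  moreover have "\<pi> ` {..<m} \<subseteq> {..<m}"
  proof
    fix z assume "z \<in> \<pi> ` {..<m}"
    then obtain x where x: "x \<in> {..<m}" "z = \<pi> x" by blast
    show "z \<in> {..<m}"
    proof (cases "x \<in> D")
      case True thus ?thesis using x assms(2) unfolding \<pi>_def by auto
    next
      case False thus ?thesis using x phi_in[of x] unfolding \<pi>_def by auto
    qed
  qed
  moreover have "\<forall>d\<in>D. \<pi> d = \<sigma> d" unfolding \<pi>_def by simp
  ultimately show ?thesis by blast
qed

lemma merge:
  assumes PQV: "P \<union> Q = V" and PQS: "P \<inter> Q = S"
    and noe: "\<forall>u\<in>P - S. \<forall>v\<in>Q - S. \<not> E u v \<and> \<not> E v u"
    and f: "proper_colouring P E m f" and g: "proper_colouring Q E m g"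
    and cf: "canon f S A" and cg: "canon g S A"
  shows "\<exists>h. proper_colouring V E m h"
proof -
  have fi: "(f s = f t) = (s = t \<or> s \<in> A \<and> t \<in> A)" if "s \<in> S" "t \<in> S" for s t
    using cf that unfolding canon_def by blast
  have gi: "(g s = g t) = (s = t \<or> s \<in> A \<and> t \<in> A)" if "s \<in> S" "t \<in> S" for s t
    using cg that unfolding canon_def by blast
  have fg: "(f s = f t) = (g s = g t)" if "s \<in> S" "t \<in> S" for s t
    using fi[OF that] gi[OF that] by simp
  define \<sigma> where "\<sigma> c = f (SOME s. s \<in> S \<and> g s = c)" for c
  have sig: "\<sigma> (g s) = f s" if "s \<in> S" for s
  proof -
    define s' where "s' = (SOME t. t \<in> S \<and> g t = g s)"
    have s'S: "s' \<in> S \<and> g s' = g s" unfolding s'_def by (rule someI[of _ s]) (use that in simp)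
    hence "f s' = f s" using fg[of s' s] that by simp
    moreover have "\<sigma> (g s) = f s'" unfolding \<sigma>_def s'_def by simp
    ultimately show ?thesis by simp
  qed
  have SP: "S \<subseteq> P" "S \<subseteq> Q" using PQS by auto
  have fm: "f v < m" if "v \<in> P" for v using f that unfolding proper_colouring_def by blast
  have gm: "g v < m" if "v \<in> Q" for v using g that unfolding proper_colouring_def by blast
  have fe: "f u \<noteq> f v" if "u \<in> P" "v \<in> P" "E u v" for u v using f that unfolding proper_colouring_def by blast
  have ge: "g u \<noteq> g v" if "u \<in> Q" "v \<in> Q" "E u v" for u v using g that unfolding proper_colouring_def by blast
  have inj: "inj_on \<sigma> (g ` S)"
  proof (rule inj_onI)
    fix x y assume xy: "x \<in> g ` S" "y \<in> g ` S" "\<sigma> x = \<sigma> y"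
    then obtain s t where st: "s \<in> S" "t \<in> S" "x = g s" "y = g t" by blast
    hence "f s = f t" using xy(3) sig by simp
    thus "x = y" using fg[OF st(1,2)] st(3,4) by simp
  qed
  have r1: "g ` S \<subseteq> {..<m}" using gm SP by auto
  have r2: "\<sigma> ` g ` S \<subseteq> {..<m}"
  proof
    fix z assume "z \<in> \<sigma> ` g ` S"
    then obtain s where "s \<in> S" "z = \<sigma> (g s)" by blast
    thus "z \<in> {..<m}" using sig fm SP by auto
  qed
  obtain \<pi> where pi: "inj_on \<pi> {..<m}" "\<pi> ` {..<m} \<subseteq> {..<m}" "\<forall>d\<in>g ` S. \<pi> d = \<sigma> d"
    using extend_inj[OF r1 r2 inj] by blast
  have pim: "\<pi> c < m" if "c < m" for c using pi(2) that by auto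
  define h where "h v = (if v \<in> P then f v else \<pi> (g v))" for v
  have hS: "h s = \<pi> (g s)" if "s \<in> S" for s
  proof -
    have "\<pi> (g s) = \<sigma> (g s)" using pi(3) that by blast
    thus ?thesis using sig[OF that] SP that unfolding h_def by auto
  qed
  have gpi: "\<pi> (g u) \<noteq> \<pi> (g w)" if "u \<in> Q" "w \<in> Q" "E u w" for u w
  proof
    assume "\<pi> (g u) = \<pi> (g w)"
    moreover have "g u < m" "g w < m" using gm that by auto
    ultimately have "g u = g w" using pi(1) unfolding inj_on_def by blast
    thus False using ge that by blast
  qed
  have "proper_colouring V E m h"
    unfolding proper_colouring_def
  proof (intro conjI ballI impI)
    fix v assume v: "v \<in> V"
    show "h v < m"
    proof (cases "v \<in> P")
      case True thus ?thesis using fm unfolding h_def by simp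
    next
      case False hence "v \<in> Q" using v PQV by blast
      thus ?thesis using False gm pim unfolding h_def by simp
    qed
  next
    fix x y assume xy: "x \<in> V" "y \<in> V" "E x y"
    show "h x \<noteq> h y"
    proof (cases "x \<in> P"; cases "y \<in> P")
      assume "x \<in> P" "y \<in> P" thus ?thesis using fe xy unfolding h_def by simp
    next
      assume a: "x \<in> P" "y \<notin> P"
      hence yQ: "y \<in> Q - S" using xy PQV PQS by blast
      hence "x \<in> S" using noe a xy by blast
      hence "h x = \<pi> (g x)" "x \<in> Q" using hS SP by auto
      moreover have "h y = \<pi> (g y)" using a unfolding h_def by simp
      ultimately show ?thesis using gpi yQ xy(3) by auto
    next
      assume a: "x \<notin> P" "y \<in> P"
      hence xQ: "x \<in> Q - S" using xy PQV PQS by blast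
      hence "y \<in> S" using noe a xy by blast
      hence "h y = \<pi> (g y)" "y \<in> Q" using hS SP by auto
      moreover have "h x = \<pi> (g x)" using a unfolding h_def by simp
      ultimately show ?thesis using gpi xQ xy(3) by auto
    next
      assume a: "x \<notin> P" "y \<notin> P"
      hence "x \<in> Q" "y \<in> Q" using xy PQV by auto
      thus ?thesis using gpi xy a unfolding h_def by auto
    qed
  qed
  thus ?thesis by blast
qed

lemma side1:
  assumes sg: "simple_graph V E" and dc: "double_critical V E" and k: "chromatic_number V E = k"
    and "A \<inter> B = {}" and el: "edgeless_on A E" and cb: "complete_on B E"
    and "a \<in> A" and "P \<subseteq> V" and "A \<union> B \<subseteq> P" and "x \<notin> P" and "E a x"
  shows "\<exists>f. proper_colouring P E (k - 1) f \<and> canon f (A \<union> B) A"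
proof -
  have aV: "a \<in> V" "x \<in> V" using sg assms(11) unfolding simple_graph_def by auto
  have le: "chromatic_number (V - {a, x}) E + 2 \<le> k" using dc aV assms(11) k unfolding double_critical_def by blast
  obtain c where c: "proper_colouring (V - {a, x}) E (chromatic_number (V - {a, x}) E) c"
    using colouring_exists[of "V - {a,x}" E] sg unfolding simple_graph_def by auto
  define f where "f v = (if v \<in> A then k - 2 else c v)" for v
  have cr: "c v < k - 2" if "v \<in> V - {a,x}" for v
  proof -
    have "c v < chromatic_number (V - {a, x}) E" using c that unfolding proper_colouring_def by blast
    thus ?thesis using le by linarith
  qed
  have Pm: "P - A \<subseteq> V - {a,x}" using assms by auto
  have "proper_colouring P E (k - 1) f"
    unfolding proper_colouring_def
  proof (intro conjI ballI impI)
    fix v assume "v \<in> P" thus "f v < k - 1" using cr Pm le unfolding f_def by fastforce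
  next
    fix u v assume uv: "u \<in> P" "v \<in> P" "E u v"
    show "f u \<noteq> f v"
    proof (cases "u \<in> A"; cases "v \<in> A")
      assume "u \<in> A" "v \<in> A" thus ?thesis using el uv unfolding edgeless_on_def by auto
    next
      assume "u \<in> A" "v \<notin> A" thus ?thesis using cr Pm uv unfolding f_def by fastforce
    next
      assume "u \<notin> A" "v \<in> A" thus ?thesis using cr Pm uv unfolding f_def by fastforce
    next
      assume "u \<notin> A" "v \<notin> A" thus ?thesis using c Pm uv unfolding f_def proper_colouring_def by auto
    qed
  qed
  moreover have "canon f (A \<union> B) A"
    unfolding canon_def
  proof (intro ballI)
    fix s t assume st: "s \<in> A \<union> B" "t \<in> A \<union> B"
    show "(f s = f t) = (s = t \<or> s \<in> A \<and> t \<in> A)"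
    proof (cases "s \<in> A"; cases "t \<in> A")
      assume "s \<notin> A" "t \<notin> A"
      hence "s \<in> B" "t \<in> B" "s \<in> V - {a,x}" "t \<in> V - {a,x}" using st Pm assms(9) by auto
      thus ?thesis using cb c \<open>s \<notin> A\<close> \<open>t \<notin> A\<close> unfolding complete_on_def proper_colouring_def f_def by (metis DiffI)
    next
      assume "s \<in> A" "t \<notin> A"
      hence "t \<in> V - {a,x}" using st Pm assms(9) by auto
      thus ?thesis using cr[of t] \<open>s \<in> A\<close> \<open>t \<notin> A\<close> unfolding f_def by auto
    next
      assume "s \<notin> A" "t \<in> A"
      hence "s \<in> V - {a,x}" using st Pm assms(9) by auto
      thus ?thesis using cr[of s] \<open>t \<in> A\<close> \<open>s \<notin> A\<close> unfolding f_def by auto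
    qed (simp add: f_def)
  qed
  ultimately show ?thesis by blast
qed

lemma side0:
  assumes sg: "simple_graph V E" and vc: "vertex_critical V E" and k: "chromatic_number V E = k"
    and cb: "complete_on B E" and "P \<subseteq> V" and "B \<subseteq> P" and "y \<in> V" and "y \<notin> P"
  shows "\<exists>f. proper_colouring P E (k - 1) f \<and> canon f B {}"
proof -
  have lt: "chromatic_number (V - {y}) E < k" using vc assms(7) k unfolding vertex_critical_def by blast
  obtain c where c: "proper_colouring (V - {y}) E (chromatic_number (V - {y}) E) c"
    using colouring_exists[of "V - {y}" E] sg unfolding simple_graph_def by auto
  have "proper_colouring P E (k - 1) c" using c lt assms(5,8) by (intro colouring_mono[OF c]) auto
  moreover have "canon c B {}"
    unfolding canon_def
  proof (intro ballI)
    fix s t assume st: "s \<in> B" "t \<in> B"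
    hence "s \<in> V - {y}" "t \<in> V - {y}" using assms(5,6,8) by auto
    hence "s \<noteq> t \<Longrightarrow> c s \<noteq> c t" using c cb st unfolding complete_on_def proper_colouring_def by blast
    thus "(c s = c t) = (s = t \<or> s \<in> {} \<and> t \<in> {})" by auto
  qed
  ultimately show ?thesis by blast
qed

lemma reach_sym:
  assumes sg: "simple_graph V E" and r: "reachable_in W E x y"
  shows "reachable_in W E y x"
  using r unfolding reachable_in_def
proof (induction rule: rtranclp_induct)
  case base thus ?case by simp
next
  case (step y z)
  hence "E z y" using sg unfolding simple_graph_def by blast
  thus ?case using step by (auto intro: converse_rtranclp_into_rtranclp)
qed

lemma exit_nb:
  assumes r: "reachable_in W E u w" and "u \<in> C" and cl: "\<forall>p\<in>C. \<forall>q\<in>W - {a}. E p q \<longrightarrow> q \<in> C"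
  shows "w \<in> C \<or> (\<exists>p\<in>C. E p a)"
  using r unfolding reachable_in_def
proof (induction rule: rtranclp_induct)
  case base thus ?case using assms(2) by simp
next
  case (step y z) thus ?case using cl by blast
qed


theorem proposition20:
  fixes V :: "'a set" and E :: "'a \<Rightarrow> 'a \<Rightarrow> bool" and k :: nat and S :: "'a set"
  assumes "simple_graph V E"
    and "\<not> complete_on V E"
    and "double_critical V E"
    and "chromatic_number V E = k"
    and "k \<ge> 6"
    and "minimal_separating_set V E S"
  shows "\<not> (\<exists>A B. A \<inter> B = {} \<and> A \<union> B = S \<and> edgeless_on A E \<and> complete_on B E)"
proof
  assume "\<exists>A B. A \<inter> B = {} \<and> A \<union> B = S \<and> edgeless_on A E \<and> complete_on B E"
  then obtain A B where AB: "A \<inter> B = {}" "A \<union> B = S" "edgeless_on A E" "complete_on B E" by blast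
  note sg = assms(1)
  have SV: "S \<subseteq> V" and dis: "disconnected (V - S) E" and mn: "\<forall>T. T \<subset> S \<longrightarrow> \<not> separating_set V E T"
    using assms(6) unfolding minimal_separating_set_def separating_set_def by auto
  obtain x0 y0 where xy0: "x0 \<in> V - S" "y0 \<in> V - S" "\<not> reachable_in (V - S) E x0 y0"
    using dis unfolding disconnected_def by blast
  define C1 where "C1 = {v \<in> V - S. reachable_in (V - S) E x0 v}"
  define R where "R = V - S - C1"
  have x0C: "x0 \<in> C1" using xy0 unfolding C1_def reachable_in_def by auto
  have y0R: "y0 \<in> R" using xy0 unfolding C1_def R_def by auto
  have clC: "q \<in> C1" if "p \<in> C1" "q \<in> V - S" "E p q" for p q
    using that unfolding C1_def reachable_in_def by (auto intro: rtranclp.rtrancl_into_rtrancl)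
  have clR: "q \<in> R" if "p \<in> R" "q \<in> V - S" "E p q" for p q
  proof (rule ccontr)
    assume "q \<notin> R"
    hence "q \<in> C1" using that R_def by auto
    moreover have "E q p" using that sg unfolding simple_graph_def by blast
    ultimately have "p \<in> C1" using clC that R_def by auto
    thus False using that R_def by auto
  qed
  define P where "P = C1 \<union> S"
  define Q where "Q = R \<union> S"
  have PQ: "P \<union> Q = V" "P \<inter> Q = S" using SV unfolding P_def Q_def R_def C1_def by auto
  have noe: "\<forall>u\<in>P - S. \<forall>v\<in>Q - S. \<not> E u v \<and> \<not> E v u"
  proof (intro ballI)
    fix u v assume "u \<in> P - S" "v \<in> Q - S"
    hence "u \<in> C1" "v \<in> R" unfolding P_def Q_def by auto
    moreover have "u \<in> V - S" using \<open>u \<in> C1\<close> unfolding C1_def by auto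
    moreover have "v \<in> V - S" using \<open>v \<in> R\<close> unfolding R_def by auto
    ultimately show "\<not> E u v \<and> \<not> E v u" using clC[of u v] clR[of v u] unfolding R_def by blast
  qed
  have PV: "P \<subseteq> V" "Q \<subseteq> V" using PQ by auto
  have k6: "k \<ge> 6" by fact
  have vc: "vertex_critical V E" using assms(3) unfolding double_critical_def by blast
  have "\<exists>h. proper_colouring V E (k - 1) h"
  proof (cases "A = {}")
    case True
    hence BS: "B = S" using AB by auto
    obtain f where f: "proper_colouring P E (k - 1) f" "canon f B {}"
      using side0[OF sg vc assms(4) AB(4) PV(1), of y0] BS y0R unfolding P_def R_def by auto
    obtain g where g: "proper_colouring Q E (k - 1) g" "canon g B {}"
      using side0[OF sg vc assms(4) AB(4) PV(2), of x0] BS x0C xy0 unfolding Q_def R_def by auto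
    show ?thesis using merge[OF PQ noe f(1) g(1)] f(2) g(2) BS by blast
  next
    case False
    then obtain a where aA: "a \<in> A" by blast
    have aS: "a \<in> S" using aA AB by auto
    have "\<not> separating_set V E (S - {a})" using mn aS by blast
    hence "\<not> disconnected (V - (S - {a})) E" using SV unfolding separating_set_def by auto
    hence conn: "reachable_in (V - (S - {a})) E u w" if "u \<in> V - S" "w \<in> V - S" for u w
      using that unfolding disconnected_def by blast
    have W: "V - (S - {a}) - {a} = V - S" using aS SV by auto
    have cl1: "\<forall>p\<in>C1. \<forall>q\<in>V - (S - {a}) - {a}. E p q \<longrightarrow> q \<in> C1"
      unfolding W using clC by blast
    have cl2: "\<forall>p\<in>R. \<forall>q\<in>V - (S - {a}) - {a}. E p q \<longrightarrow> q \<in> R"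
      unfolding W using clR by blast
    have "y0 \<in> C1 \<or> (\<exists>p\<in>C1. E p a)"
      by (rule exit_nb[OF conn[OF xy0(1) xy0(2)] x0C cl1])
    moreover have "y0 \<notin> C1" using y0R unfolding R_def by blast
    ultimately have n1: "\<exists>p\<in>C1. E p a" by blast
    have "x0 \<in> R \<or> (\<exists>p\<in>R. E p a)"
      by (rule exit_nb[OF conn[OF xy0(2) xy0(1)] y0R cl2])
    moreover have "x0 \<notin> R" using x0C unfolding R_def by blast
    ultimately have n2: "\<exists>p\<in>R. E p a" by blast
    obtain y where y: "y \<in> C1" "E y a" using n1 by blast
    obtain x where x: "x \<in> R" "E x a" using n2 by blast
    have ya: "E a y" "E a x" using x y sg unfolding simple_graph_def by blast+
    have xP: "x \<notin> P" using x unfolding P_def R_def by blast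
    have yQ: "y \<notin> Q" using y unfolding Q_def R_def C1_def by blast
    have ABP: "A \<union> B \<subseteq> P" "A \<union> B \<subseteq> Q" using AB(2) unfolding P_def Q_def by auto
    obtain f where f: "proper_colouring P E (k - 1) f" "canon f (A \<union> B) A"
      using side1[OF sg assms(3,4) AB(1,3,4) aA PV(1) ABP(1) xP ya(2)] by blast
    obtain g where g: "proper_colouring Q E (k - 1) g" "canon g (A \<union> B) A"
      using side1[OF sg assms(3,4) AB(1,3,4) aA PV(2) ABP(2) yQ ya(1)] by blast
    show ?thesis using merge[OF PQ noe f(1) g(1)] f(2) g(2) AB(2) by blast
  qed
  then obtain h where "proper_colouring V E (k - 1) h" by blast
  hence "chromatic_number V E \<le> k - 1" by (rule chrom_le)
  thus False using assms(4) k6 by linarith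
qed

end
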